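(* The Goldman Lie algebra $\mathfrak{G}_{\Sigma_{1,0}}$ of the closed torus over $\mathbb{Q}$ is generated, as a Lie algebra over $\mathbb{Q}$, by the three elements $a$, $a^{-1}b^{-1}+b+1$, and $b$.
   Context: Let $\Sigma_{1,0}=T^2$ be the closed oriented torus and $\hat\pi$ its set of free homotopy classes of loops, identified with $\pi_1(T^2)\cong\mathbb{Z}^2$; with $a,b$ the standard generators, every class is written $a^ib^j$, $(i,j)\in\mathbb{Z}^2$, and $1=a^0b^0$ is the class of the contractible loop. The Goldman bracket (defined for classes meeting transversally by $[\alpha,\beta]=\sum_{p\in\alpha\cap\beta}\epsilon(p)\,\alpha*_p\beta$, with $\epsilon(p)$ the intersection sign and $\alpha*_p\beta$ the loop product at $p$, extended bilinearly) is given on the torus by $[a^ib^j,a^kb^l]=(il-jk)\,a^{i+k}b^{j+l}$. $\mathfrak{G}_{\Sigma_{1,0}}$ denotes the $\mathbb{Q}$-vector space with basis $\hat\pi$ with this bracket. *)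

theory Defs
  imports Complex_Main "HOL-Library.Poly_Mapping"
begin

text \<open>The Goldman Lie algebra of the closed torus over the rationals: the rational vector
space with basis the free homotopy classes a^i b^j, identified with pairs (i,j) of integers,
realised as finitely supported functions from int x int to rat.\<close>

type_synonym goldman_torus = "(int \<times> int) \<Rightarrow>\<^sub>0 rat"

definition gcls :: "int \<Rightarrow> int \<Rightarrow> goldman_torus" where
  "gcls i j = Poly_Mapping.single (i, j) 1"

definition gscale :: "rat \<Rightarrow> goldman_torus \<Rightarrow> goldman_torus" where
  "gscale r x = Poly_Mapping.map (\<lambda>c. r * c) x"

definition gbracket :: "goldman_torus \<Rightarrow> goldman_torus \<Rightarrow> goldman_torus" where
  "gbracket x y = (\<Sum>p\<in>Poly_Mapping.keys x. \<Sum>q\<in>Poly_Mapping.keys y.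
      Poly_Mapping.single (fst p + fst q, snd p + snd q)
        (of_int (fst p * snd q - snd p * fst q) * Poly_Mapping.lookup x p * Poly_Mapping.lookup y q))"

inductive_set lie_gen :: "goldman_torus set \<Rightarrow> goldman_torus set" for S where
  gen: "x \<in> S \<Longrightarrow> x \<in> lie_gen S"
| zero: "0 \<in> lie_gen S"
| add: "x \<in> lie_gen S \<Longrightarrow> y \<in> lie_gen S \<Longrightarrow> x + y \<in> lie_gen S"
| scale: "x \<in> lie_gen S \<Longrightarrow> gscale r x \<in> lie_gen S"
| bracket: "x \<in> lie_gen S \<Longrightarrow> y \<in> lie_gen S \<Longrightarrow> gbracket x y \<in> lie_gen S"

end

theory Submission
  imports Defs
begin

lemma gbracket_sup:
  assumes "finite A" "finite B" "Poly_Mapping.keys x \<subseteq> A" "Poly_Mapping.keys y \<subseteq> B"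
  shows "gbracket x y = (\<Sum>p\<in>A. \<Sum>q\<in>B.
      Poly_Mapping.single (fst p + fst q, snd p + snd q)
        (of_int (fst p * snd q - snd p * fst q) * Poly_Mapping.lookup x p * Poly_Mapping.lookup y q))"
proof -
  have "gbracket x y = (\<Sum>p\<in>Poly_Mapping.keys x. \<Sum>q\<in>B.
      Poly_Mapping.single (fst p + fst q, snd p + snd q)
        (of_int (fst p * snd q - snd p * fst q) * Poly_Mapping.lookup x p * Poly_Mapping.lookup y q))"
    unfolding gbracket_def
    by (intro sum.cong refl sum.mono_neutral_left assms) (auto simp: in_keys_iff)
  also have "\<dots> = (\<Sum>p\<in>A. \<Sum>q\<in>B.
      Poly_Mapping.single (fst p + fst q, snd p + snd q)
        (of_int (fst p * snd q - snd p * fst q) * Poly_Mapping.lookup x p * Poly_Mapping.lookup y q))"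
    by (intro sum.mono_neutral_left assms) (auto simp: in_keys_iff)
  finally show ?thesis .
qed

lemma gbracket_add_right: "gbracket x (y + z) = gbracket x y + gbracket x z"
proof -
  let ?B = "Poly_Mapping.keys y \<union> Poly_Mapping.keys z"
  have f: "finite ?B" by simp
  have k: "Poly_Mapping.keys (y+z) \<subseteq> ?B" by (rule keys_add)
  have ky: "Poly_Mapping.keys y \<subseteq> ?B" and kz: "Poly_Mapping.keys z \<subseteq> ?B" by auto
  show ?thesis
    unfolding gbracket_sup[OF finite_keys f order.refl k]
      gbracket_sup[OF finite_keys f order.refl ky] gbracket_sup[OF finite_keys f order.refl kz]
    by (auto simp: lookup_add distrib_left single_add sum.distrib)
qed

lemma gbracket_gcls: "gbracket (gcls i j) (gcls k l) = Poly_Mapping.single (i+k, j+l) (of_int (i*l - j*k))"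
  unfolding gbracket_def gcls_def by simp

lemma gscale_single: "gscale r (Poly_Mapping.single p c) = Poly_Mapping.single p (r*c)"
  unfolding gscale_def by simp

lemma gscale_gcls: "gscale r (gcls i j) = Poly_Mapping.single (i,j) r"
  unfolding gcls_def by (simp add: gscale_single)

lemma expand: "f = (\<Sum>p\<in>Poly_Mapping.keys f. Poly_Mapping.single p (Poly_Mapping.lookup f p))"
  by (rule poly_mapping_eqI) (simp add: lookup_sum lookup_single when_def in_keys_iff)

lemma sum_in: "finite A \<Longrightarrow> (\<And>x. x\<in>A \<Longrightarrow> g x \<in> lie_gen S) \<Longrightarrow> sum g A \<in> lie_gen S"
  by (induction A rule: finite_induct) (auto intro: lie_gen.intros)

lemma single_in: "gcls i j \<in> lie_gen S \<Longrightarrow> Poly_Mapping.single (i,j) r \<in> lie_gen S"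
  by (metis gscale_gcls lie_gen.scale)

lemma diff_in: "x \<in> lie_gen S \<Longrightarrow> y \<in> lie_gen S \<Longrightarrow> x - y \<in> lie_gen S"
proof -
  assume a: "x \<in> lie_gen S" "y \<in> lie_gen S"
  have "gscale (-1) y = - y"
    by (rule poly_mapping_eqI) (simp add: gscale_def map.rep_eq when_def)
  with a show ?thesis by (metis lie_gen.add lie_gen.scale diff_conv_add_uminus)
qed

lemma br_in: "gcls i j \<in> lie_gen S \<Longrightarrow> gcls k l \<in> lie_gen S \<Longrightarrow> i*l - j*k \<noteq> 0 \<Longrightarrow> gcls (i+k) (j+l) \<in> lie_gen S"
proof -
  assume a: "gcls i j \<in> lie_gen S" "gcls k l \<in> lie_gen S" "i*l - j*k \<noteq> 0"
  have "gbracket (gcls i j) (gcls k l) \<in> lie_gen S" using a by (intro lie_gen.bracket)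
  hence "gscale (1 / of_int (i*l-j*k)) (gbracket (gcls i j) (gcls k l)) \<in> lie_gen S" by (rule lie_gen.scale)
  have e: "(rat_of_int i * rat_of_int l = rat_of_int j * rat_of_int k) = (i*l = j*k)"
    by (metis of_int_eq_iff of_int_mult)
  thus ?thesis using a(3) \<open>gscale _ _ \<in> _\<close> unfolding gbracket_gcls gscale_single by (simp add: gcls_def e)
qed

lemma shiftI:
  assumes "j \<noteq> 0" "gcls 1 0 \<in> lie_gen S" "gcls (-1) 0 \<in> lie_gen S" "gcls i0 j \<in> lie_gen S"
  shows "gcls i j \<in> lie_gen S"
proof (induction i rule: int_induct[where k=i0])
  case base then show ?case using assms by simp
next
  case (step1 i)
  from br_in[OF assms(2) step1(2)] assms(1) show ?case by (simp add: add.commute)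
next
  case (step2 i)
  from br_in[OF assms(3) step2(2)] assms(1) show ?case by simp
qed

lemma shiftJ:
  assumes "i \<noteq> 0" "gcls 0 1 \<in> lie_gen S" "gcls 0 (-1) \<in> lie_gen S" "gcls i j0 \<in> lie_gen S"
  shows "gcls i j \<in> lie_gen S"
proof (induction j rule: int_induct[where k=j0])
  case base then show ?case using assms by simp
next
  case (step1 j)
  from br_in[OF assms(2) step1(2)] assms(1) show ?case by (simp add: add.commute)
next
  case (step2 j)
  from br_in[OF assms(3) step2(2)] assms(1) show ?case by simp
qed

theorem mainTheorem2:
  shows "lie_gen {gcls 1 0, gcls (-1) (-1) + gcls 0 1 + gcls 0 0, gcls 0 1} = UNIV"
proof -
  define S where "S = {gcls 1 0, gcls (-1) (-1) + gcls 0 1 + gcls 0 0, gcls 0 1}"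
  define c where "c = gcls (-1) (-1) + gcls 0 1 + gcls 0 0"
  have A: "gcls 1 0 \<in> lie_gen S" and B: "gcls 0 1 \<in> lie_gen S" and C: "c \<in> lie_gen S"
    unfolding S_def c_def by (auto intro: lie_gen.gen)
  have AB: "gcls 1 1 \<in> lie_gen S" using br_in[OF A B] by simp
  have "gbracket (gcls 1 0) c - gcls 1 1 \<in> lie_gen S"
    by (intro diff_in lie_gen.bracket A C AB)
  hence "gscale (-1) (gbracket (gcls 1 0) c - gcls 1 1) \<in> lie_gen S" by (rule lie_gen.scale)
  moreover have "gscale (-1) (gbracket (gcls 1 0) c - gcls 1 1) = gcls 0 (-1)"
    unfolding c_def gbracket_add_right gbracket_gcls by (simp add: gcls_def gscale_single)
  ultimately have Bm: "gcls 0 (-1) \<in> lie_gen S" by simp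
  have "gbracket (gcls 0 1) c \<in> lie_gen S" by (intro lie_gen.bracket B C)
  moreover have "gbracket (gcls 0 1) c = gcls (-1) 0"
    unfolding c_def gbracket_add_right gbracket_gcls by (simp add: gcls_def)
  ultimately have Am: "gcls (-1) 0 \<in> lie_gen S" by simp
  have nz: "gcls i j \<in> lie_gen S" if "i \<noteq> 0" for i j
    using shiftJ[OF that B Bm shiftI[of 1, OF _ A Am B]] by simp
  have all: "gcls i j \<in> lie_gen S" for i j
  proof (cases "i = 0")
    case True
    show ?thesis
    proof (cases "j = 0")
      case True
      have "c - gcls (-1) (-1) - gcls 0 1 \<in> lie_gen S"
        by (intro diff_in C B nz) simp
      moreover have "c - gcls (-1) (-1) - gcls 0 1 = gcls 0 0" unfolding c_def by simp
      ultimately show ?thesis using \<open>i=0\<close> True by simp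
    next
      case False
      from shiftI[OF False A Am nz[of 1 j]] show ?thesis by simp
    qed
  next
    case False then show ?thesis by (rule nz)
  qed
  have "f \<in> lie_gen S" for f
  proof -
    have "(\<Sum>p\<in>Poly_Mapping.keys f. Poly_Mapping.single p (Poly_Mapping.lookup f p)) \<in> lie_gen S"
      by (rule sum_in) (auto intro: single_in all)
    then show ?thesis using expand[of f] by simp
  qed
  then show ?thesis unfolding S_def by auto
qed

end
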